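(* Let $F_0=\{x\in\Omega\cap\partial E:\ \limsup_{r\to0^+}\mu(B(x,r))/r^n=0\}$. Then either $\mathcal{H}(F_0)=0$ or $\mathcal{H}^{n-1}_{Euc}(F_0)=\infty$. Furthermore, for $\varepsilon>0$ and \[ K_\varepsilon=\Big\{x\in\Omega\cap\partial E:\ \limsup_{r\to0^+}\frac{\mu(B(x,r))}{r^n}<\varepsilon\Big\}, \] one has $\mathcal{H}(K_\varepsilon)\le C\,\varepsilon^{(n-1)/n}\,\mathcal{H}^{n-1}_{Euc}(K_\varepsilon)$ with $C$ independent of $\varepsilon$.
   Context: Let $n\ge2$ and let $\omega$ be a strong $A_\infty$-weight on $\mathbb{R}^n$: $\omega\ge0$ locally integrable, $d\mu=\omega\,d\mathcal{L}^n$ doubling with respect to Euclidean balls, and there are a metric $d$ and $C\ge1$ with $C^{-1}\mu(B_{x,y})^{1/n}\le d(x,y)\le C\mu(B_{x,y})^{1/n}$, $B_{x,y}$ the smallest Euclidean ball containing $x,y$. $B(x,r)$ denotes a Euclidean ball, $B^d(x,r)$ a $d$-ball. $\mathcal{H}$ is the codimension-one Hausdorff measure in $(\mathbb{R}^n,d,\mu)$: $\mathcal{H}(A)=\lim_{\delta\to0}\inf\{\sum_i\mu(B^d(x_i,r_i))/r_i:\ A\subset\bigcup_iB^d(x_i,r_i),\ r_i<\delta\}$; $\mathcal{H}^{n-1}_{Euc}$ is the $(n-1)$-dimensional Euclidean Hausdorff measure. Perimeter $P(E,A)$ is taken in $(\mathbb{R}^n,d,\mu)$ (total variation of $\chi_E$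 defined via $d$-upper gradients). A Borel set $E$ of finite perimeter is a $K$-quasiminimal set in open $\Omega$ if for all open $U\Subset\Omega$ and Borel $F,G\Subset U$, $P(E,U)\le KP((E\cup F)\setminus G,U)$. Standing hypothesis: $E\subset\Omega$ is such a $K$-quasiminimal set with $P(E,\Omega)<\infty$, normalized so that $E=\mathrm{int}(\overline E)$ and $\mu(B(x,r)\cap E)>0$, $\mu(B(x,r)\setminus E)>0$ for all $x\in\partial E$, $r>0$. *)

theory Defs
  imports "HOL-Analysis.Analysis"
begin

definition wmeasure :: "('a::euclidean_space \<Rightarrow> real) \<Rightarrow> 'a measure" where
  "wmeasure \<omega> = density lebesgue (\<lambda>x. ennreal (\<omega> x))"

abbreviation wmu :: "('a::euclidean_space \<Rightarrow> real) \<Rightarrow> 'a set \<Rightarrow> ennreal" where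
  "wmu \<omega> A \<equiv> emeasure (wmeasure \<omega>) A"

definition Bxy :: "'a::euclidean_space \<Rightarrow> 'a \<Rightarrow> 'a set" where
  "Bxy x y = cball (midpoint x y) (dist x y / 2)"

definition is_metric :: "('a \<Rightarrow> 'a \<Rightarrow> real) \<Rightarrow> bool" where
  "is_metric d \<longleftrightarrow> (\<forall>x y. d x y = 0 \<longleftrightarrow> x = y) \<and> (\<forall>x y. d x y = d y x)
      \<and> (\<forall>x y z. d x z \<le> d x y + d y z)"

definition strong_Ainf_with :: "('a::euclidean_space \<Rightarrow> real) \<Rightarrow> ('a \<Rightarrow> 'a \<Rightarrow> real) \<Rightarrow> bool" where
  "strong_Ainf_with \<omega> d \<longleftrightarrow>
     (\<forall>x. 0 \<le> \<omega> x) \<and> \<omega> \<in> borel_measurable lebesgue \<and>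
     (\<forall>K. compact K \<longrightarrow> (\<integral>\<^sup>+x\<in>K. ennreal (\<omega> x) \<partial>lebesgue) < \<infinity>) \<and>
     (\<exists>Cd. \<forall>x r. 0 < r \<longrightarrow> wmu \<omega> (ball x (2 * r)) \<le> ennreal Cd * wmu \<omega> (ball x r)) \<and>
     is_metric d \<and>
     (\<exists>C\<ge>1. \<forall>x y.
        enn2real (wmu \<omega> (Bxy x y)) powr (1 / real DIM('a)) / C \<le> d x y \<and>
        d x y \<le> C * enn2real (wmu \<omega> (Bxy x y)) powr (1 / real DIM('a)))"

definition dball :: "('a \<Rightarrow> 'a \<Rightarrow> real) \<Rightarrow> 'a \<Rightarrow> real \<Rightarrow> 'a set" where
  "dball d x r = {y. d x y < r}"

definition codim1_H_delta ::
  "('a::euclidean_space \<Rightarrow> real) \<Rightarrow> ('a \<Rightarrow> 'a \<Rightarrow> real) \<Rightarrow> real \<Rightarrow> 'a set \<Rightarrow> ennreal" where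
  "codim1_H_delta \<omega> d \<delta> A =
     (INF cov \<in> {(I :: nat set, c :: nat \<Rightarrow> 'a, r :: nat \<Rightarrow> real).
                 A \<subseteq> (\<Union>i\<in>I. dball d (c i) (r i)) \<and> (\<forall>i\<in>I. 0 < r i \<and> r i < \<delta>)}.
        (case cov of (I, c, r) \<Rightarrow>
           (\<Sum>i. if i \<in> I then wmu \<omega> (dball d (c i) (r i)) / ennreal (r i) else 0)))"

definition codim1_H :: "('a::euclidean_space \<Rightarrow> real) \<Rightarrow> ('a \<Rightarrow> 'a \<Rightarrow> real) \<Rightarrow> 'a set \<Rightarrow> ennreal" where
  "codim1_H \<omega> d A = (SUP \<delta>\<in>{0<..}. codim1_H_delta \<omega> d \<delta> A)"

definition hausdorff_const :: "real \<Rightarrow> real" where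
  "hausdorff_const s = pi powr (s / 2) / Gamma (s / 2 + 1)"

definition euc_hausdorff_delta :: "real \<Rightarrow> real \<Rightarrow> 'a::euclidean_space set \<Rightarrow> ennreal" where
  "euc_hausdorff_delta s \<delta> A =
     (INF C \<in> {C :: nat \<Rightarrow> 'a set. A \<subseteq> (\<Union>i. C i) \<and> (\<forall>i. bounded (C i) \<and> diameter (C i) < \<delta>)}.
        (\<Sum>i. ennreal (hausdorff_const s * (diameter (C i) / 2) powr s)))"

definition euc_hausdorff :: "real \<Rightarrow> 'a::euclidean_space set \<Rightarrow> ennreal" where
  "euc_hausdorff s A = (SUP \<delta>\<in>{0<..}. euc_hausdorff_delta s \<delta> A)"

text \<open>g is a d-upper gradient of u in the open set U: for every curve in U parametrized
  1-Lipschitz with respect to d (this includes all arc-length parametrized rectifiable curves,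
  and for those the integral below is the line integral).\<close>
definition upper_gradient_in ::
  "('a::euclidean_space \<Rightarrow> 'a \<Rightarrow> real) \<Rightarrow> 'a set \<Rightarrow> ('a \<Rightarrow> real) \<Rightarrow> ('a \<Rightarrow> ennreal) \<Rightarrow> bool" where
  "upper_gradient_in d U u g \<longleftrightarrow> g \<in> borel_measurable borel \<and>
     (\<forall>(L::real) (\<gamma>::real \<Rightarrow> 'a). 0 \<le> L \<longrightarrow> \<gamma> ` {0..L} \<subseteq> U \<longrightarrow>
        (\<forall>s\<in>{0..L}. \<forall>t\<in>{0..L}. d (\<gamma> s) (\<gamma> t) \<le> \<bar>s - t\<bar>) \<longrightarrow>
        ennreal \<bar>u (\<gamma> L) - u (\<gamma> 0)\<bar> \<le> (\<integral>\<^sup>+s\<in>{0..L}. g (\<gamma> s) \<partial>lborel))"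

definition d_loc_lipschitz_on :: "('a \<Rightarrow> 'a \<Rightarrow> real) \<Rightarrow> 'a set \<Rightarrow> ('a \<Rightarrow> real) \<Rightarrow> bool" where
  "d_loc_lipschitz_on d U u \<longleftrightarrow>
     (\<forall>x\<in>U. \<exists>r>0. \<exists>L. \<forall>y\<in>U \<inter> dball d x r. \<forall>z\<in>U \<inter> dball d x r. \<bar>u y - u z\<bar> \<le> L * d y z)"

definition perimeter ::
  "('a::euclidean_space \<Rightarrow> real) \<Rightarrow> ('a \<Rightarrow> 'a \<Rightarrow> real) \<Rightarrow> 'a set \<Rightarrow> 'a set \<Rightarrow> ennreal" where
  "perimeter \<omega> d E U =
     (INF ug \<in> {(u :: nat \<Rightarrow> 'a \<Rightarrow> real, g :: nat \<Rightarrow> 'a \<Rightarrow> ennreal).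
                 (\<forall>i. d_loc_lipschitz_on d U (u i) \<and> upper_gradient_in d U (u i) (g i)) \<and>
                 (\<forall>K. compact K \<and> K \<subseteq> U \<longrightarrow>
                    ((\<lambda>i. \<integral>\<^sup>+x\<in>K. ennreal \<bar>u i x - indicator E x\<bar> \<partial>wmeasure \<omega>) \<longlongrightarrow> 0) sequentially)}.
        (case ug of (u, g) \<Rightarrow> liminf (\<lambda>i. \<integral>\<^sup>+x\<in>U. g i x \<partial>wmeasure \<omega>)))"

definition compactly_contained :: "'a::euclidean_space set \<Rightarrow> 'a set \<Rightarrow> bool" (infix "\<Subset>" 50) where
  "A \<Subset> B \<longleftrightarrow> compact (closure A) \<and> closure A \<subseteq> B"

definition quasiminimal ::
  "('a::euclidean_space \<Rightarrow> real) \<Rightarrow> ('a \<Rightarrow> 'a \<Rightarrow> real) \<Rightarrow> real \<Rightarrow> 'a set \<Rightarrow> 'a set \<Rightarrow> bool" where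
  "quasiminimal \<omega> d K \<Omega> E \<longleftrightarrow> E \<in> sets borel \<and>
     (\<forall>U F G. open U \<and> U \<Subset> \<Omega> \<and> F \<in> sets borel \<and> G \<in> sets borel \<and> F \<Subset> U \<and> G \<Subset> U \<longrightarrow>
        perimeter \<omega> d E U \<le> ennreal K * perimeter \<omega> d ((E \<union> F) - G) U)"

end

theory Submission imports Defs "HOL-Library.Nat_Bijection" begin


lemma euc_delta_mono:
  assumes "A \<subseteq> B" shows "euc_hausdorff_delta s \<delta> A \<le> euc_hausdorff_delta s \<delta> B"
  unfolding euc_hausdorff_delta_def using assms by (intro INF_superset_mono) (auto intro: less_le_trans)

lemma euc_mono:
  assumes "A \<subseteq> B" shows "euc_hausdorff s A \<le> euc_hausdorff s B"
  unfolding euc_hausdorff_def by (intro SUP_mono) (use euc_delta_mono[OF assms] in auto)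

lemma euc_delta_le: "0 < \<delta> \<Longrightarrow> euc_hausdorff_delta s \<delta> A \<le> euc_hausdorff s A"
  unfolding euc_hausdorff_def by (rule SUP_upper) auto

lemma euc_delta_antimono:
  assumes "\<delta>1 \<le> \<delta>2" shows "euc_hausdorff_delta s \<delta>2 A \<le> euc_hausdorff_delta s \<delta>1 A"
  unfolding euc_hausdorff_delta_def using assms by (intro INF_superset_mono) (auto intro: less_le_trans)

lemma euc_delta_countable_subadd:
  fixes B :: "nat \<Rightarrow> 'a::euclidean_space set"
  shows "euc_hausdorff_delta s \<delta> (\<Union>k. B k) \<le> (\<Sum>k. euc_hausdorff_delta s \<delta> (B k))"
proof (rule ennreal_le_epsilon)
  fix e :: real assume fin: "(\<Sum>k. euc_hausdorff_delta s \<delta> (B k)) < top" and e: "0 < e"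
  let ?g = "\<lambda>C::'a set. ennreal (hausdorff_const s * (diameter C / 2) powr s)"
  let ?Cov = "\<lambda>A. {C :: nat \<Rightarrow> 'a set. A \<subseteq> (\<Union>i. C i) \<and> (\<forall>i. bounded (C i) \<and> diameter (C i) < \<delta>)}"
  have fk: "euc_hausdorff_delta s \<delta> (B k) < top" for k
    using fin by (metis ennreal_suminf_lessD top.not_eq_extremum)
  have "\<forall>k. \<exists>C. C \<in> ?Cov (B k) \<and> (\<Sum>i. ?g (C i)) < euc_hausdorff_delta s \<delta> (B k) + ennreal (e / 2 ^ Suc k)"
  proof
    fix k
    have "euc_hausdorff_delta s \<delta> (B k) < euc_hausdorff_delta s \<delta> (B k) + ennreal (e / 2 ^ Suc k)"
      using fk[of k] e by (simp add: ennreal_less_top less_top)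
    then show "\<exists>C. C \<in> ?Cov (B k) \<and> (\<Sum>i. ?g (C i)) < euc_hausdorff_delta s \<delta> (B k) + ennreal (e / 2 ^ Suc k)"
      unfolding euc_hausdorff_delta_def INF_less_iff by blast
  qed
  then obtain Cs where Csc: "\<forall>k. Cs k \<in> ?Cov (B k) \<and> (\<Sum>i. ?g (Cs k i)) < euc_hausdorff_delta s \<delta> (B k) + ennreal (e / 2 ^ Suc k)"
    using choice[of "\<lambda>k C. C \<in> ?Cov (B k) \<and> (\<Sum>i. ?g (C i)) < euc_hausdorff_delta s \<delta> (B k) + ennreal (e / 2 ^ Suc k)"] by blast
  then have Cs: "\<And>k. Cs k \<in> ?Cov (B k)"
    and cost: "\<And>k. (\<Sum>i. ?g (Cs k i)) < euc_hausdorff_delta s \<delta> (B k) + ennreal (e / 2 ^ Suc k)" by auto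
  define C where "C j = (case prod_decode j of (k, i) \<Rightarrow> Cs k i)" for j
  have "C \<in> ?Cov (\<Union>k. B k)"
  proof safe
    fix x k assume "x \<in> B k"
    then obtain i where "x \<in> Cs k i" using Cs[of k] by auto
    then show "x \<in> (\<Union>j. C j)" unfolding C_def
      by (intro UN_I[of "prod_encode (k, i)"]) auto
  next
    fix j show "bounded (C j)" "diameter (C j) < \<delta>"
      using Cs unfolding C_def by (auto split: prod.splits)
  qed
  then have "euc_hausdorff_delta s \<delta> (\<Union>k. B k) \<le> (\<Sum>j. ?g (C j))"
    unfolding euc_hausdorff_delta_def by (rule INF_lower2) simp
  also have "(\<Sum>j. ?g (C j)) = (\<Sum>k. \<Sum>i. ?g (Cs k i))"
  proof -
    have "(\<Sum>j. ?g (C j)) = (\<Sum>j. (\<lambda>(k,i). ?g (Cs k i)) (prod_decode j))"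
      unfolding C_def by (simp add: case_prod_unfold)
    also have "\<dots> = (\<Sum>k. \<Sum>i. ?g (Cs k i))"
      by (rule suminf_ennreal_2dimen) simp
    finally show ?thesis .
  qed
  also have "\<dots> \<le> (\<Sum>k. euc_hausdorff_delta s \<delta> (B k) + ennreal (e / 2 ^ Suc k))"
    by (intro suminf_le) (use cost in \<open>auto intro: less_imp_le\<close>)
  also have "\<dots> = (\<Sum>k. euc_hausdorff_delta s \<delta> (B k)) + (\<Sum>k. ennreal (e / 2 ^ Suc k))"
    by (rule suminf_add[symmetric]) auto
  also have "(\<Sum>k. ennreal (e / 2 ^ Suc k)) = ennreal e"
  proof -
    have "(\<lambda>k. e / 2 ^ Suc k) sums e"
      using power_half_series[THEN sums_mult, of e] by (simp add: field_simps)
    then show ?thesis using e by (intro suminf_ennreal_eq) auto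
  qed
  finally show "euc_hausdorff_delta s \<delta> (\<Union>k. B k) \<le> (\<Sum>k. euc_hausdorff_delta s \<delta> (B k)) + ennreal e" .
qed


lemma euc_countable_subadd:
  fixes B :: "nat \<Rightarrow> 'a::euclidean_space set"
  shows "euc_hausdorff s (\<Union>k. B k) \<le> (\<Sum>k. euc_hausdorff s (B k))"
  unfolding euc_hausdorff_def[of s "\<Union>k. B k"]
proof (rule SUP_least)
  fix \<delta> :: real assume "\<delta> \<in> {0<..}"
  then have "euc_hausdorff_delta s \<delta> (B k) \<le> euc_hausdorff s (B k)" for k
    by (intro euc_delta_le) auto
  then have "(\<Sum>k. euc_hausdorff_delta s \<delta> (B k)) \<le> (\<Sum>k. euc_hausdorff s (B k))"
    by (intro suminf_le) auto
  then show "euc_hausdorff_delta s \<delta> (\<Union>k. B k) \<le> (\<Sum>k. euc_hausdorff s (B k))"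
    using euc_delta_countable_subadd order_trans by blast
qed

lemma codim_delta_mono:
  assumes "A \<subseteq> B" shows "codim1_H_delta \<omega> d \<delta> A \<le> codim1_H_delta \<omega> d \<delta> B"
  unfolding codim1_H_delta_def using assms by (intro INF_superset_mono) auto

lemma codim_mono:
  assumes "A \<subseteq> B" shows "codim1_H \<omega> d A \<le> codim1_H \<omega> d B"
  unfolding codim1_H_def by (intro SUP_mono) (use codim_delta_mono[OF assms] in auto)

lemma codim_delta_le: "0 < \<delta> \<Longrightarrow> codim1_H_delta \<omega> d \<delta> A \<le> codim1_H \<omega> d A"
  unfolding codim1_H_def by (rule SUP_upper) auto

lemma codim_delta_countable_subadd:
  fixes B :: "nat \<Rightarrow> 'a::euclidean_space set"
  shows "codim1_H_delta \<omega> d \<delta> (\<Union>k. B k) \<le> (\<Sum>k. codim1_H_delta \<omega> d \<delta> (B k))"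
proof (rule ennreal_le_epsilon)
  fix e :: real assume fin: "(\<Sum>k. codim1_H_delta \<omega> d \<delta> (B k)) < top" and e: "0 < e"
  let ?g = "\<lambda>(I::nat set, c::nat \<Rightarrow> 'a, r::nat \<Rightarrow> real). (\<Sum>i. if i \<in> I then wmu \<omega> (dball d (c i) (r i)) / ennreal (r i) else 0)"
  let ?Cov = "\<lambda>A. {(I :: nat set, c :: nat \<Rightarrow> 'a, r :: nat \<Rightarrow> real).
                 A \<subseteq> (\<Union>i\<in>I. dball d (c i) (r i)) \<and> (\<forall>i\<in>I. 0 < r i \<and> r i < \<delta>)}"
  have fk: "codim1_H_delta \<omega> d \<delta> (B k) < top" for k
    using fin by (metis ennreal_suminf_lessD top.not_eq_extremum)
  have "\<forall>k. \<exists>C. C \<in> ?Cov (B k) \<and> ?g C < codim1_H_delta \<omega> d \<delta> (B k) + ennreal (e / 2 ^ Suc k)"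
  proof
    fix k
    have "codim1_H_delta \<omega> d \<delta> (B k) < codim1_H_delta \<omega> d \<delta> (B k) + ennreal (e / 2 ^ Suc k)"
      using fk[of k] e by (simp add: ennreal_less_top less_top)
    then show "\<exists>C. C \<in> ?Cov (B k) \<and> ?g C < codim1_H_delta \<omega> d \<delta> (B k) + ennreal (e / 2 ^ Suc k)"
      unfolding codim1_H_delta_def INF_less_iff by blast
  qed
  then obtain Cs where Csc: "\<forall>k. Cs k \<in> ?Cov (B k) \<and> ?g (Cs k) < codim1_H_delta \<omega> d \<delta> (B k) + ennreal (e / 2 ^ Suc k)"
    using choice[of "\<lambda>k C. C \<in> ?Cov (B k) \<and> ?g C < codim1_H_delta \<omega> d \<delta> (B k) + ennreal (e / 2 ^ Suc k)"] by blast
  define Is where "Is k = fst (Cs k)" for k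
  define cs where "cs k = fst (snd (Cs k))" for k
  define rs where "rs k = snd (snd (Cs k))" for k
  have Cs_eq: "Cs k = (Is k, cs k, rs k)" for k unfolding Is_def cs_def rs_def by simp
  have Cs: "B k \<subseteq> (\<Union>i\<in>Is k. dball d (cs k i) (rs k i))" "\<And>i. i \<in> Is k \<Longrightarrow> 0 < rs k i \<and> rs k i < \<delta>" for k
    using Csc[rule_format, of k] unfolding Cs_eq by auto
  have cost: "(\<Sum>i. if i \<in> Is k then wmu \<omega> (dball d (cs k i) (rs k i)) / ennreal (rs k i) else 0)
      < codim1_H_delta \<omega> d \<delta> (B k) + ennreal (e / 2 ^ Suc k)" for k
    using Csc[rule_format, of k] unfolding Cs_eq by auto
  define I where "I = {j. snd (prod_decode j) \<in> Is (fst (prod_decode j))}"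
  define c where "c j = cs (fst (prod_decode j)) (snd (prod_decode j))" for j
  define r where "r j = rs (fst (prod_decode j)) (snd (prod_decode j))" for j
  have "(I, c, r) \<in> ?Cov (\<Union>k. B k)"
  proof (clarsimp, intro conjI ballI)
    show "\<Union> (range B) \<subseteq> (\<Union>i\<in>I. dball d (c i) (r i))"
    proof
      fix x assume "x \<in> \<Union> (range B)"
      then obtain k where "x \<in> B k" by auto
      then obtain i where "i \<in> Is k" "x \<in> dball d (cs k i) (rs k i)" using Cs(1)[of k] by auto
      then show "x \<in> (\<Union>i\<in>I. dball d (c i) (r i))" unfolding I_def c_def r_def
        by (intro UN_I[of "prod_encode (k, i)"]) auto
    qed
  next
    fix j assume "j \<in> I"
    then show "0 < r j" "r j < \<delta>" using Cs(2) unfolding I_def r_def by auto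
  qed
  then have "codim1_H_delta \<omega> d \<delta> (\<Union>k. B k) \<le> ?g (I, c, r)"
    unfolding codim1_H_delta_def by (rule INF_lower2) simp
  also have "?g (I, c, r) = (\<Sum>k. \<Sum>i. if i \<in> Is k then wmu \<omega> (dball d (cs k i) (rs k i)) / ennreal (rs k i) else 0)"
  proof -
    have "?g (I, c, r) = (\<Sum>j. (\<lambda>(k,i). if i \<in> Is k then wmu \<omega> (dball d (cs k i) (rs k i)) / ennreal (rs k i) else 0) (prod_decode j))"
      unfolding I_def c_def r_def by (simp only: prod.case) (simp add: split_beta)
    also have "\<dots> = (\<Sum>k. \<Sum>i. if i \<in> Is k then wmu \<omega> (dball d (cs k i) (rs k i)) / ennreal (rs k i) else 0)"
      by (rule suminf_ennreal_2dimen) simp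
    finally show ?thesis .
  qed
  also have "\<dots> \<le> (\<Sum>k. codim1_H_delta \<omega> d \<delta> (B k) + ennreal (e / 2 ^ Suc k))"
    by (intro suminf_le) (use cost in \<open>auto intro: less_imp_le\<close>)
  also have "\<dots> = (\<Sum>k. codim1_H_delta \<omega> d \<delta> (B k)) + (\<Sum>k. ennreal (e / 2 ^ Suc k))"
    by (rule suminf_add[symmetric]) auto
  also have "(\<Sum>k. ennreal (e / 2 ^ Suc k)) = ennreal e"
  proof -
    have "(\<lambda>k. e / 2 ^ Suc k) sums e"
      using power_half_series[THEN sums_mult, of e] by (simp add: field_simps)
    then show ?thesis using e by (intro suminf_ennreal_eq) auto
  qed
  finally show "codim1_H_delta \<omega> d \<delta> (\<Union>k. B k) \<le> (\<Sum>k. codim1_H_delta \<omega> d \<delta> (B k)) + ennreal e" .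
qed

lemma codim_countable_subadd:
  fixes B :: "nat \<Rightarrow> 'a::euclidean_space set"
  shows "codim1_H \<omega> d (\<Union>k. B k) \<le> (\<Sum>k. codim1_H \<omega> d (B k))"
  unfolding codim1_H_def[of \<omega> d "\<Union>k. B k"]
proof (rule SUP_least)
  fix \<delta> :: real assume "\<delta> \<in> {0<..}"
  then have "codim1_H_delta \<omega> d \<delta> (B k) \<le> codim1_H \<omega> d (B k)" for k
    by (intro codim_delta_le) auto
  then have "(\<Sum>k. codim1_H_delta \<omega> d \<delta> (B k)) \<le> (\<Sum>k. codim1_H \<omega> d (B k))"
    by (intro suminf_le) auto
  then show "codim1_H_delta \<omega> d \<delta> (\<Union>k. B k) \<le> (\<Sum>k. codim1_H \<omega> d (B k))"
    using codim_delta_countable_subadd order_trans by blast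
qed



lemma ennreal_suminf_head: "(\<Sum>n. f n) = f 0 + (\<Sum>n. f (Suc n) :: ennreal)"
proof -
  have "(\<lambda>n. f (Suc n)) sums (\<Sum>n. f (Suc n))" by (rule summable_sums) simp
  then have "f sums ((\<Sum>n. f (Suc n)) + f 0)" by (rule sums_Suc)
  then show ?thesis by (simp add: sums_iff add.commute)
qed

lemma euc_empty: "euc_hausdorff s ({} :: 'a::euclidean_space set) = 0"
proof -
  have "euc_hausdorff_delta s \<delta> ({} :: 'a set) = 0" if "0 < \<delta>" for \<delta>
  proof -
    have "(\<lambda>i. {}) \<in> {C :: nat \<Rightarrow> 'a set. {} \<subseteq> (\<Union>i. C i) \<and> (\<forall>i. bounded (C i) \<and> diameter (C i) < \<delta>)}"
      using that by simp
    then have "euc_hausdorff_delta s \<delta> ({} :: 'a set) \<le> (\<Sum>i. ennreal (hausdorff_const s * (diameter ({}::'a set) / 2) powr s))"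
      unfolding euc_hausdorff_delta_def by (rule INF_lower2) simp
    then show ?thesis by simp
  qed
  then show ?thesis unfolding euc_hausdorff_def by simp
qed

lemma euc_subadd2:
  "euc_hausdorff s (A \<union> B) \<le> euc_hausdorff s A + euc_hausdorff s (B :: 'a::euclidean_space set)"
proof -
  define F where "F k = (if k = 0 then A else if k = 1 then B else {})" for k :: nat
  have "A \<union> B = (\<Union>k. F k)" unfolding F_def by (auto split: if_splits)
  then have "euc_hausdorff s (A \<union> B) \<le> (\<Sum>k. euc_hausdorff s (F k))" using euc_countable_subadd by metis
  also have "\<dots> = euc_hausdorff s A + euc_hausdorff s B"
    by (subst ennreal_suminf_head, subst ennreal_suminf_head) (simp add: F_def euc_empty)
  finally show ?thesis .
qed

lemma euc_delta_sep:
  fixes P Q :: "'a::euclidean_space set"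
  assumes sep: "\<And>p q. p \<in> P \<Longrightarrow> q \<in> Q \<Longrightarrow> \<gamma> \<le> dist p q" and "\<delta> \<le> \<gamma>" and s: "0 < s" and dpos: "0 < \<delta>"
  shows "euc_hausdorff_delta s \<delta> P + euc_hausdorff_delta s \<delta> Q \<le> euc_hausdorff_delta s \<delta> (P \<union> Q)"
  unfolding euc_hausdorff_delta_def[of s \<delta> "P \<union> Q"]
proof (rule INF_greatest)
  fix C :: "nat \<Rightarrow> 'a set" assume "C \<in> {C. P \<union> Q \<subseteq> (\<Union>i. C i) \<and> (\<forall>i. bounded (C i) \<and> diameter (C i) < \<delta>)}"
  then have cov: "P \<union> Q \<subseteq> \<Union> (range C)" and C: "\<forall>i. bounded (C i) \<and> diameter (C i) < \<delta>" by auto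
  let ?g = "\<lambda>X::'a set. ennreal (hausdorff_const s * (diameter X / 2) powr s)"
  define CP where "CP i = (if C i \<inter> P \<noteq> {} then C i else {})" for i
  define CQ where "CQ i = (if C i \<inter> Q \<noteq> {} then C i else {})" for i
  have g0: "?g {} = 0" using s by simp
  have notboth: "\<not> (C i \<inter> P \<noteq> {} \<and> C i \<inter> Q \<noteq> {})" for i
  proof
    assume "C i \<inter> P \<noteq> {} \<and> C i \<inter> Q \<noteq> {}"
    then obtain p q where pq: "p \<in> C i" "p \<in> P" "q \<in> C i" "q \<in> Q" by auto
    then have "dist p q \<le> diameter (C i)" using C by (intro diameter_bounded_bound) auto
    then show False using sep[OF pq(2,4)] C \<open>\<delta> \<le> \<gamma>\<close> by (metis le_less_trans linorder_not_less order_le_less_trans)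
  qed
  have "euc_hausdorff_delta s \<delta> P \<le> (\<Sum>i. ?g (CP i))"
    unfolding euc_hausdorff_delta_def
  proof (rule INF_lower2)
    show "CP \<in> {C. P \<subseteq> \<Union> (range C) \<and> (\<forall>i. bounded (C i) \<and> diameter (C i) < \<delta>)}"
      using cov C dpos unfolding CP_def by (auto, blast)
  qed simp
  moreover have "euc_hausdorff_delta s \<delta> Q \<le> (\<Sum>i. ?g (CQ i))"
    unfolding euc_hausdorff_delta_def
  proof (rule INF_lower2)
    show "CQ \<in> {C. Q \<subseteq> \<Union> (range C) \<and> (\<forall>i. bounded (C i) \<and> diameter (C i) < \<delta>)}"
      using cov C dpos unfolding CQ_def by (auto, blast)
  qed simp
  moreover have "(\<Sum>i. ?g (CP i)) + (\<Sum>i. ?g (CQ i)) \<le> (\<Sum>i. ?g (C i))"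
  proof -
    have "(\<Sum>i. ?g (CP i)) + (\<Sum>i. ?g (CQ i)) = (\<Sum>i. ?g (CP i) + ?g (CQ i))"
      by (rule suminf_add) auto
    also have "\<dots> \<le> (\<Sum>i. ?g (C i))"
      by (intro suminf_le) (use notboth g0 in \<open>auto simp: CP_def CQ_def\<close>)
    finally show ?thesis .
  qed
  ultimately show "euc_hausdorff_delta s \<delta> P + euc_hausdorff_delta s \<delta> Q \<le> (\<Sum>i. ?g (C i))"
    by (meson add_mono order_trans)
qed

lemma euc_sep:
  fixes P Q :: "'a::euclidean_space set"
  assumes sep: "\<And>p q. p \<in> P \<Longrightarrow> q \<in> Q \<Longrightarrow> \<gamma> \<le> dist p q" and g: "0 < \<gamma>" and s: "0 < s"
  shows "euc_hausdorff s P + euc_hausdorff s Q \<le> euc_hausdorff s (P \<union> Q)"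
proof -
  have "euc_hausdorff_delta s \<delta>1 P + euc_hausdorff_delta s \<delta>2 Q \<le> euc_hausdorff s (P \<union> Q)"
    if "0 < \<delta>1" "0 < \<delta>2" for \<delta>1 \<delta>2
  proof -
    define m where "m = min \<gamma> (min \<delta>1 \<delta>2)"
    have m: "0 < m" "m \<le> \<gamma>" "m \<le> \<delta>1" "m \<le> \<delta>2" using that g unfolding m_def by auto
    have "euc_hausdorff_delta s \<delta>1 P + euc_hausdorff_delta s \<delta>2 Q
          \<le> euc_hausdorff_delta s m P + euc_hausdorff_delta s m Q"
      using m by (intro add_mono euc_delta_antimono)
    also have "\<dots> \<le> euc_hausdorff_delta s m (P \<union> Q)"
      using m by (intro euc_delta_sep[OF sep _ s]) auto
    also have "\<dots> \<le> euc_hausdorff s (P \<union> Q)" using m by (intro euc_delta_le)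
    finally show ?thesis .
  qed
  then show ?thesis
  proof -
    assume H: "\<And>\<delta>1 \<delta>2. 0 < \<delta>1 \<Longrightarrow> 0 < \<delta>2 \<Longrightarrow> euc_hausdorff_delta s \<delta>1 P + euc_hausdorff_delta s \<delta>2 Q \<le> euc_hausdorff s (P \<union> Q)"
    have "(SUP \<delta>1\<in>{0<..}. euc_hausdorff_delta s \<delta>1 P) + euc_hausdorff s Q
        = (SUP \<delta>1\<in>{0<..}. euc_hausdorff_delta s \<delta>1 P + euc_hausdorff s Q)"
      by (rule ennreal_SUP_add_left[symmetric]) auto
    also have "\<dots> \<le> euc_hausdorff s (P \<union> Q)"
    proof (rule SUP_least)
      fix \<delta>1 :: real assume d1: "\<delta>1 \<in> {0<..}"
      have "euc_hausdorff_delta s \<delta>1 P + euc_hausdorff s Q = (SUP \<delta>2\<in>{0<..}. euc_hausdorff_delta s \<delta>1 P + euc_hausdorff_delta s \<delta>2 Q)"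
        unfolding euc_hausdorff_def[of s Q] by (rule ennreal_SUP_add_right) auto
      also have "\<dots> \<le> euc_hausdorff s (P \<union> Q)"
        using H d1 by (intro SUP_least) auto
      finally show "euc_hausdorff_delta s \<delta>1 P + euc_hausdorff s Q \<le> euc_hausdorff s (P \<union> Q)" .
    qed
    finally show ?thesis unfolding euc_hausdorff_def[of s P] .
  qed
qed



lemma sum_even_odd_split: "(\<Sum>i<2*N. f i) = (\<Sum>i<N. f (2*i)) + (\<Sum>i<N. f (2*i+1::nat)) " for f :: "nat \<Rightarrow> ennreal"
  by (induction N) (simp_all add: ac_simps)

lemma euc_caratheodory_closed:
  fixes X F :: "'a::euclidean_space set"
  assumes F: "closed F" and s: "0 < s"
  shows "euc_hausdorff s (X \<inter> F) + euc_hausdorff s (X - F) \<le> euc_hausdorff s X"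
proof (cases "F = {} \<or> euc_hausdorff s X = top")
  case True then show ?thesis by (auto simp: euc_empty)
next
  case False
  then have Fne: "F \<noteq> {}" and Xfin: "euc_hausdorff s X < top" by (auto simp: top.not_eq_extremum)
  let ?E = "euc_hausdorff s"
  define h where "h x = infdist x F" for x
  define G where "G j = {x\<in>X. 1 / (real j + 1) \<le> h x}" for j :: nat
  define R where "R i = G (Suc i) - G i" for i
  have Gmono: "G i \<subseteq> G j" if "i \<le> j" for i j
  proof -
    have "1 / (real j + 1) \<le> 1 / (real i + 1)" using that by (simp add: frac_le)
    then show ?thesis unfolding G_def by auto
  qed
  have GX: "G j \<subseteq> X" for j unfolding G_def by auto
  have RX: "R j \<subseteq> X" for j unfolding R_def using GX by auto
  have a: "?E (X \<inter> F) + ?E (G j) \<le> ?E X" for j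
  proof -
    have "?E (X \<inter> F) + ?E (G j) \<le> ?E ((X \<inter> F) \<union> G j)"
    proof (rule euc_sep[OF _ _ s])
      fix p q assume "p \<in> X \<inter> F" "q \<in> G j"
      then have "h q \<le> dist q p" "1 / (real j + 1) \<le> h q" unfolding h_def G_def by (auto intro: infdist_le)
      then show "1 / (real j + 1) \<le> dist p q" by (simp add: dist_commute)
    qed simp
    also have "\<dots> \<le> ?E X" using GX by (intro euc_mono) auto
    finally show ?thesis .
  qed
  have b: "?E (X - F) \<le> ?E (G j) + (\<Sum>i. ?E (R (i + j)))" for j
  proof -
    have "X - F \<subseteq> G j \<union> (\<Union>i. R (i + j))"
    proof
      fix x assume x: "x \<in> X - F"
      then have hp: "0 < h x" unfolding h_def using infdist_pos_not_in_closed[OF F Fne] by auto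
      then obtain n :: nat where "inverse (real (Suc n)) < h x"
        using reals_Archimedean by blast
      then have "1 / (real n + 1) < h x" by (simp add: inverse_eq_divide add.commute)
      then have ex: "x \<in> G n" using x unfolding G_def by auto
      define m where "m = (LEAST n. x \<in> G n)"
      have xm: "x \<in> G m" unfolding m_def by (rule LeastI[of _ n]) (rule ex)
      show "x \<in> G j \<union> (\<Union>i. R (i + j))"
      proof (cases "m \<le> j")
        case True then show ?thesis using Gmono xm by auto
      next
        case False
        then obtain k where k: "m = Suc k" "j \<le> k" by (cases m) auto
        have "x \<notin> G k" using k unfolding m_def using not_less_Least[of k "\<lambda>n. x \<in> G n"] by auto
        then have "x \<in> R (k - j + j)" using xm k unfolding R_def by auto
        then show ?thesis by blast
      qed
    qed
    then have "?E (X - F) \<le> ?E (G j \<union> (\<Union>i. R (i + j)))" by (rule euc_mono)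
    also have "\<dots> \<le> ?E (G j) + ?E (\<Union>i. R (i + j))" by (rule euc_subadd2)
    also have "\<dots> \<le> ?E (G j) + (\<Sum>i. ?E (R (i + j)))" by (intro add_mono euc_countable_subadd) simp
    finally show ?thesis .
  qed
  have par: "(\<Sum>i<N. ?E (R (2*i+p))) \<le> ?E (\<Union>i<N. R (2*i+p))" for N p
  proof (induction N)
    case 0 then show ?case by simp
  next
    case (Suc N)
    have "?E (\<Union>i<N. R (2*i+p)) + ?E (R (2*N+p)) \<le> ?E ((\<Union>i<N. R (2*i+p)) \<union> R (2*N+p))"
    proof (cases "N = 0")
      case True then show ?thesis by (simp add: euc_empty)
    next
      case False
      define a where "a = 1 / (real (2*N+p))"
      define b where "b = 1 / (real (2*N+p) + 1)"
      have ab: "0 < a - b" using False unfolding a_def b_def by (simp add: frac_less2)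
      show ?thesis
      proof (rule euc_sep[OF _ ab s])
        fix x y assume x: "x \<in> (\<Union>i<N. R (2*i+p))" and y: "y \<in> R (2*N+p)"
        then obtain i where i: "i < N" "x \<in> G (Suc (2*i+p))" unfolding R_def by auto
        have "1 / (real (Suc (2*i+p)) + 1) \<ge> a" unfolding a_def using i(1) by (intro frac_le) auto
        then have hx: "a \<le> h x" using i(2) unfolding G_def by auto
        have hy: "h y < b" using y unfolding R_def G_def b_def by auto
        have "h x \<le> h y + dist x y" unfolding h_def by (rule infdist_triangle)
        then show "a - b \<le> dist x y" using hx hy by linarith
      qed
    qed
    also have "\<dots> = ?E (\<Union>i<Suc N. R (2*i+p))" by (simp add: lessThan_Suc Un_commute)
    finally have step: "?E (\<Union>i<N. R (2*i+p)) + ?E (R (2*N+p)) \<le> ?E (\<Union>i<Suc N. R (2*i+p))" .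
    have "(\<Sum>i<Suc N. ?E (R (2*i+p))) = (\<Sum>i<N. ?E (R (2*i+p))) + ?E (R (2*N+p))" by simp
    also have "\<dots> \<le> ?E (\<Union>i<N. R (2*i+p)) + ?E (R (2*N+p))" using Suc.IH by (rule add_right_mono)
    also have "\<dots> \<le> ?E (\<Union>i<Suc N. R (2*i+p))" by (rule step)
    finally show ?case .
  qed
  have parX: "(\<Sum>i<N. ?E (R (2*i+p))) \<le> ?E X" for N p
  proof -
    have "(\<Union>i<N. R (2*i+p)) \<subseteq> X" using RX by auto
    then show ?thesis by (rule order_trans[OF par euc_mono])
  qed
  have sumR: "(\<Sum>i. ?E (R i)) \<le> 2 * ?E X"
  proof (rule suminf_le_const, simp)
    fix n
    have "(\<Sum>i<n. ?E (R i)) \<le> (\<Sum>i<2*n. ?E (R i))" by (intro sum_mono2) auto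
    also have "\<dots> = (\<Sum>i<n. ?E (R (2*i))) + (\<Sum>i<n. ?E (R (2*i+1)))" by (rule sum_even_odd_split)
    also have "\<dots> \<le> ?E X + ?E X" using parX[of n 0] parX[of n 1] parX[of 0 n] parX[of 1 n] by (intro add_mono) auto
    finally show "(\<Sum>i<n. ?E (R i)) \<le> 2 * ?E X" by (simp add: mult_2)
  qed
  moreover have "2 * ?E X < top" using Xfin by (simp add: mult_2)
  ultimately have sumfin: "(\<Sum>i. ?E (R i)) < top" by (rule le_less_trans)
  have Rfin: "?E (R i) < top" for i using sumfin by (rule ennreal_suminf_lessD)
  define r where "r i = enn2real (?E (R i))" for i
  have Rr: "?E (R i) = ennreal (r i)" for i unfolding r_def using Rfin[of i] by (simp add: less_top)
  have r0: "0 \<le> r i" for i unfolding r_def by simp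
  have rsum: "summable r" using sumfin Rr r0 by (intro summable_suminf_not_top) auto
  show ?thesis
  proof (rule ennreal_le_epsilon)
    fix e :: real assume e: "0 < e"
    obtain j where j: "\<And>n. n \<ge> j \<Longrightarrow> norm (\<Sum>i. r (i + n)) < e" using suminf_exist_split[OF e rsum] by auto
    have tail: "(\<Sum>i. ?E (R (i + j))) \<le> ennreal e"
    proof -
      have "(\<Sum>i. ?E (R (i + j))) = ennreal (\<Sum>i. r (i + j))"
        unfolding Rr using r0 summable_ignore_initial_segment[OF rsum] by (intro suminf_ennreal2) auto
      also have "\<dots> \<le> ennreal e" using j[of j] by (intro ennreal_leI) auto
      finally show ?thesis .
    qed
    have "?E (X \<inter> F) + ?E (X - F) \<le> ?E (X \<inter> F) + (?E (G j) + ennreal e)"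
      using b[of j] add_left_mono[OF tail, of "?E (G j)"] by (intro add_left_mono) (rule order_trans)
    also have "\<dots> = (?E (X \<inter> F) + ?E (G j)) + ennreal e" by (simp add: add.assoc)
    also have "\<dots> \<le> ?E X + ennreal e" using a[of j] by (rule add_right_mono)
    finally show "?E (X \<inter> F) + ?E (X - F) \<le> ?E X + ennreal e" .
  qed
qed



lemma sets_wmeasure[simp]: "sets (wmeasure \<omega>) = sets lebesgue"
  unfolding wmeasure_def by simp

lemma open_sets_wm: "open S \<Longrightarrow> S \<in> sets (wmeasure \<omega>)"
  by (simp add: borel_open sets_completionI_sets)

lemma closed_sets_wm: "closed S \<Longrightarrow> S \<in> sets (wmeasure \<omega>)"
  by (simp add: borel_closed sets_completionI_sets)

lemma wfacts:
  fixes \<omega> :: "'a::euclidean_space \<Rightarrow> real"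
  assumes "strong_Ainf_with \<omega> d"
  shows "\<And>x. 0 \<le> \<omega> x" "\<omega> \<in> borel_measurable lebesgue"
    "\<And>K. compact K \<Longrightarrow> (\<integral>\<^sup>+x\<in>K. ennreal (\<omega> x) \<partial>lebesgue) < \<infinity>"
    "\<exists>Cd\<ge>0. \<forall>x r. 0 < r \<longrightarrow> wmu \<omega> (ball x (2 * r)) \<le> ennreal Cd * wmu \<omega> (ball x r)"
    "is_metric d"
    "\<exists>C\<ge>1. \<forall>x y.
        enn2real (wmu \<omega> (Bxy x y)) powr (1 / real DIM('a)) / C \<le> d x y \<and>
        d x y \<le> C * enn2real (wmu \<omega> (Bxy x y)) powr (1 / real DIM('a))"
proof -
  show "\<And>x. 0 \<le> \<omega> x" "\<omega> \<in> borel_measurable lebesgue"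
    "\<And>K. compact K \<Longrightarrow> (\<integral>\<^sup>+x\<in>K. ennreal (\<omega> x) \<partial>lebesgue) < \<infinity>" "is_metric d"
    "\<exists>C\<ge>1. \<forall>x y.
        enn2real (wmu \<omega> (Bxy x y)) powr (1 / real DIM('a)) / C \<le> d x y \<and>
        d x y \<le> C * enn2real (wmu \<omega> (Bxy x y)) powr (1 / real DIM('a))"
    using assms unfolding strong_Ainf_with_def by auto
  obtain Cd where Cd: "\<forall>x r. 0 < r \<longrightarrow> wmu \<omega> (ball x (2 * r)) \<le> ennreal Cd * wmu \<omega> (ball x r)"
    using assms unfolding strong_Ainf_with_def by auto
  show "\<exists>Cd\<ge>0. \<forall>x r. 0 < r \<longrightarrow> wmu \<omega> (ball x (2 * r)) \<le> ennreal Cd * wmu \<omega> (ball x r)"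
  proof (intro exI[of _ "max Cd 0"] conjI allI impI)
    fix x :: 'a and r :: real assume "0 < r"
    then have "wmu \<omega> (ball x (2 * r)) \<le> ennreal Cd * wmu \<omega> (ball x r)" using Cd by auto
    also have "\<dots> \<le> ennreal (max Cd 0) * wmu \<omega> (ball x r)"
      by (intro mult_right_mono ennreal_leI) auto
    finally show "wmu \<omega> (ball x (2 * r)) \<le> ennreal (max Cd 0) * wmu \<omega> (ball x r)" .
  qed simp
qed

lemma wmu_compact_fin:
  assumes w: "strong_Ainf_with \<omega> d" and K: "compact K"
  shows "wmu \<omega> K < \<infinity>"
proof -
  have "K \<in> sets lebesgue" using K by (simp add: compact_imp_closed closed_sets_wm[of K \<omega>])
  then have "wmu \<omega> K = (\<integral>\<^sup>+x\<in>K. ennreal (\<omega> x) \<partial>lebesgue)"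
    unfolding wmeasure_def using wfacts(2)[OF w] by (subst emeasure_density) auto
  then show ?thesis using wfacts(3)[OF w K] by simp
qed

lemma wmu_bounded_fin:
  assumes w: "strong_Ainf_with \<omega> d" and K: "bounded K"
  shows "wmu \<omega> K < \<infinity>"
proof -
  have "wmu \<omega> K \<le> wmu \<omega> (closure K)"
    by (intro emeasure_mono closure_subset closed_sets_wm) auto
  also have "\<dots> < \<infinity>" using K by (intro wmu_compact_fin[OF w]) (simp add: compact_closure)
  finally show ?thesis .
qed

lemma wmu_singleton:
  assumes w: "strong_Ainf_with \<omega> d"
  shows "wmu \<omega> {x} = 0"
proof -
  have N: "{x} \<in> null_sets lebesgue" by simp
  have "wmu \<omega> {x} = (\<integral>\<^sup>+y. ennreal (\<omega> y) * indicator {x} y \<partial>lebesgue)"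
    unfolding wmeasure_def using wfacts(2)[OF w] N by (subst emeasure_density) auto
  also have "\<dots> = 0" by (rule nn_integral_null_set[OF N])
  finally show ?thesis .
qed



lemma dbl3:
  fixes \<omega> :: "'a::euclidean_space \<Rightarrow> real"
  assumes Cd: "0 \<le> Cd" and dbl: "\<forall>x r. 0 < r \<longrightarrow> wmu \<omega> (ball x (2 * r)) \<le> ennreal Cd * wmu \<omega> (ball x r)"
    and xy: "x \<noteq> y"
  shows "wmu \<omega> (ball x (2 * dist x y)) \<le> ennreal (Cd ^ 3) * wmu \<omega> (Bxy x y)"
proof -
  define R where "R = dist x y"
  define m where "m = midpoint x y"
  have R: "0 < R" using xy unfolding R_def by simp
  have "ball x (2 * R) \<subseteq> ball m (2 * (2 * (2 * (R / 2))))"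
  proof
    fix z assume "z \<in> ball x (2 * R)"
    then have "dist x z < 2 * R" by simp
    moreover have "dist m x = R / 2" unfolding m_def R_def by (simp add: dist_midpoint dist_commute)
    moreover have "dist m z \<le> dist m x + dist x z" by (rule dist_triangle)
    ultimately show "z \<in> ball m (2 * (2 * (2 * (R / 2))))" using R unfolding mem_ball by linarith
  qed
  then have "wmu \<omega> (ball x (2 * R)) \<le> wmu \<omega> (ball m (2 * (2 * (2 * (R / 2)))))"
    by (intro emeasure_mono open_sets_wm) auto
  also have "\<dots> \<le> ennreal Cd * wmu \<omega> (ball m (2 * (2 * (R / 2))))" by (rule dbl[rule_format]) (use R in simp)
  also have "\<dots> \<le> ennreal Cd * (ennreal Cd * wmu \<omega> (ball m (2 * (R / 2))))"
    by (intro mult_left_mono dbl[rule_format]) (use R in auto)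
  also have "\<dots> \<le> ennreal Cd * (ennreal Cd * (ennreal Cd * wmu \<omega> (ball m (R / 2))))"
    by (intro mult_left_mono dbl[rule_format]) (use R in auto)
  also have "\<dots> \<le> ennreal Cd * (ennreal Cd * (ennreal Cd * wmu \<omega> (Bxy x y)))"
    unfolding Bxy_def m_def R_def by (intro mult_left_mono emeasure_mono closed_sets_wm) auto
  also have "\<dots> = ennreal (Cd ^ 3) * wmu \<omega> (Bxy x y)"
    using Cd by (simp add: ennreal_mult' power3_eq_cube mult.assoc)
  finally show ?thesis unfolding R_def .
qed

lemma comp_bound:
  fixes \<omega> :: "'a::euclidean_space \<Rightarrow> real"
  assumes w: "strong_Ainf_with \<omega> d" and C: "1 \<le> C"
    and lower: "enn2real (wmu \<omega> (Bxy x y)) powr (1 / real DIM('a)) / C \<le> d x y"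
    and dxy: "d x y < \<rho>"
  shows "wmu \<omega> (Bxy x y) \<le> ennreal ((C * \<rho>) ^ DIM('a))"
proof -
  define a where "a = enn2real (wmu \<omega> (Bxy x y))"
  define n where "n = DIM('a)"
  have n: "0 < n" unfolding n_def by simp
  have fin: "wmu \<omega> (Bxy x y) < \<infinity>" unfolding Bxy_def by (intro wmu_bounded_fin[OF w]) auto
  then have eq: "wmu \<omega> (Bxy x y) = ennreal a" unfolding a_def by (simp add: less_top)
  have a0: "0 \<le> a" unfolding a_def by simp
  have "C * d x y < C * \<rho>" using dxy C by simp
  moreover have "a powr (1 / real n) \<le> C * d x y" using lower C unfolding a_def n_def by (simp add: divide_le_eq mult.commute)
  ultimately have "a powr (1 / real n) < C * \<rho>" by linarith
  then have "(a powr (1 / real n)) ^ n \<le> (C * \<rho>) ^ n" by (intro power_mono) auto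
  moreover have "(a powr (1 / real n)) ^ n = a"
  proof (cases "a = 0")
    case True then show ?thesis using n by simp
  next
    case False
    then have "0 < a" using a0 by simp
    then have "(a powr (1 / real n)) ^ n = (a powr (1 / real n)) powr (real n)"
      by (simp add: powr_realpow)
    also have "\<dots> = a" using n a0 by (simp add: powr_powr)
    finally show ?thesis .
  qed
  ultimately have "a \<le> (C * \<rho>) ^ n" by simp
  then show ?thesis unfolding eq n_def by (rule ennreal_leI)
qed

lemma dball_bound:
  fixes \<omega> :: "'a::euclidean_space \<Rightarrow> real"
  assumes w: "strong_Ainf_with \<omega> d" and C: "1 \<le> C"
    and lower: "\<And>x y. enn2real (wmu \<omega> (Bxy x y)) powr (1 / real DIM('a)) / C \<le> d x y"
    and Cd: "0 \<le> Cd" and dbl: "\<forall>x r. 0 < r \<longrightarrow> wmu \<omega> (ball x (2 * r)) \<le> ennreal Cd * wmu \<omega> (ball x r)"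
  shows "wmu \<omega> (dball d x \<rho>) \<le> ennreal (Cd ^ 3) * ennreal ((C * \<rho>) ^ DIM('a))"
proof -
  let ?M = "ennreal (Cd ^ 3) * ennreal ((C * \<rho>) ^ DIM('a))"
  define S where "S k = dball d x \<rho> \<inter> ball x (real k)" for k :: nat
  have Sk: "wmu \<omega> (S k) \<le> ?M" for k
  proof (cases "S k \<subseteq> {x}")
    case True
    then have "wmu \<omega> (S k) \<le> wmu \<omega> {x}" by (intro emeasure_mono closed_sets_wm) auto
    then show ?thesis using wmu_singleton[OF w] by simp
  next
    case False
    then obtain y0 where y0: "y0 \<in> S k" "y0 \<noteq> x" by auto
    define T where "T = (\<lambda>z. dist x z) ` S k"
    have bdd: "bdd_above T" unfolding T_def S_def by (rule bdd_aboveI[of _ "real k"]) auto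
    have Tne: "T \<noteq> {}" using y0 unfolding T_def by auto
    have "dist x y0 \<le> Sup T" using y0 bdd unfolding T_def by (intro cSup_upper) auto
    moreover have "0 < dist x y0" using y0 by simp
    ultimately have Spos: "0 < Sup T" by linarith
    then have "Sup T / 2 < Sup T" by simp
    then obtain t where "t \<in> T" "Sup T / 2 < t" using less_cSup_iff[OF Tne bdd] by blast
    then obtain y where y: "y \<in> S k" "Sup T / 2 < dist x y" unfolding T_def by auto
    then have yx: "y \<noteq> x" using Spos by auto
    have "S k \<subseteq> ball x (2 * dist x y)"
    proof
      fix z assume "z \<in> S k"
      then have "dist x z \<le> Sup T" using bdd unfolding T_def by (intro cSup_upper) auto
      then show "z \<in> ball x (2 * dist x y)" using y by simp
    qed
    then have "wmu \<omega> (S k) \<le> wmu \<omega> (ball x (2 * dist x y))" by (intro emeasure_mono open_sets_wm) auto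
    also have "\<dots> \<le> ennreal (Cd ^ 3) * wmu \<omega> (Bxy x y)" using dbl3[OF Cd dbl] yx by (simp add: eq_commute)
    also have "\<dots> \<le> ?M"
    proof (intro mult_left_mono comp_bound[OF w C lower])
      show "d x y < \<rho>" using y unfolding S_def dball_def by auto
    qed auto
    finally show ?thesis .
  qed
  show ?thesis
  proof (cases "dball d x \<rho> \<in> sets lebesgue")
    case False then show ?thesis by (simp add: emeasure_notin_sets)
  next
    case True
    have meas: "range S \<subseteq> sets (wmeasure \<omega>)" unfolding S_def using True by (auto intro: sets.Int open_sets_wm)
    have inc: "incseq S" unfolding S_def incseq_def by auto
    have "(\<Union>k. S k) = dball d x \<rho>"
    proof safe
      fix z assume "z \<in> dball d x \<rho>"
      obtain k :: nat where "dist x z < real k" using reals_Archimedean2 by blast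
      then show "z \<in> (\<Union>k. S k)" using \<open>z \<in> dball d x \<rho>\<close> unfolding S_def by auto
    qed (auto simp: S_def)
    then have "wmu \<omega> (dball d x \<rho>) = (SUP k. wmu \<omega> (S k))" using SUP_emeasure_incseq[OF meas inc] by simp
    also have "\<dots> \<le> ?M" using Sk by (intro SUP_least) auto
    finally show ?thesis .
  qed
qed



lemma pow_sum_le: "0 \<le> u \<Longrightarrow> 0 \<le> v \<Longrightarrow> (u + v) ^ k \<le> 2 ^ k * (u ^ k + v ^ k)" for u v :: real
proof -
  assume u: "0 \<le> u" and v: "0 \<le> v"
  have "(u + v) ^ k \<le> (2 * max u v) ^ k" using u v by (intro power_mono) auto
  also have "\<dots> = 2 ^ k * (max u v) ^ k" by (simp add: power_mult_distrib)
  also have "(max u v) ^ k \<le> u ^ k + v ^ k" using u v by (cases "u \<le> v") (auto simp: max_def)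
  then have "2 ^ k * (max u v) ^ k \<le> 2 ^ k * (u ^ k + v ^ k)" by simp
  finally show ?thesis .
qed

lemma hc_pos: "0 < s \<Longrightarrow> 0 < hausdorff_const s"
  unfolding hausdorff_const_def by (intro divide_pos_pos) auto

lemma dist_to_d:
  fixes \<omega> :: "'a::euclidean_space \<Rightarrow> real"
  assumes w: "strong_Ainf_with \<omega> d" and C: "1 \<le> C"
    and upper: "\<And>x y. d x y \<le> C * enn2real (wmu \<omega> (Bxy x y)) powr (1 / real DIM('a))"
    and t: "dist x y \<le> t" "0 < t" and e: "0 < \<epsilon>"
    and b: "wmu \<omega> (ball x (2 * t)) \<le> ennreal (\<epsilon> * (2 * t) ^ DIM('a))"
  shows "d x y \<le> C * \<epsilon> powr (1 / real DIM('a)) * (2 * t)"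
proof -
  define n where "n = DIM('a)"
  have n: "0 < n" unfolding n_def by simp
  have "Bxy x y \<subseteq> ball x (2 * t)"
  proof
    fix z assume "z \<in> Bxy x y"
    then have "dist (midpoint x y) z \<le> dist x y / 2" unfolding Bxy_def by simp
    moreover have "dist x (midpoint x y) = dist x y / 2" by (simp add: dist_midpoint)
    moreover have "dist x z \<le> dist x (midpoint x y) + dist (midpoint x y) z" by (rule dist_triangle)
    ultimately show "z \<in> ball x (2 * t)" using t by simp
  qed
  then have "wmu \<omega> (Bxy x y) \<le> wmu \<omega> (ball x (2 * t))" by (intro emeasure_mono open_sets_wm) auto
  also note b
  finally have "enn2real (wmu \<omega> (Bxy x y)) \<le> \<epsilon> * (2 * t) ^ n" unfolding n_def
    using e t by (intro enn2real_leI) auto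
  then have "enn2real (wmu \<omega> (Bxy x y)) powr (1 / real n) \<le> (\<epsilon> * (2 * t) ^ n) powr (1 / real n)"
    by (intro powr_mono2) auto
  also have "\<dots> = \<epsilon> powr (1 / real n) * ((2 * t) ^ n) powr (1 / real n)"
    using e t by (simp add: powr_mult)
  also have "((2 * t) ^ n) powr (1 / real n) = 2 * t"
  proof -
    have "((2 * t) ^ n) powr (1 / real n) = ((2 * t) powr (real n)) powr (1 / real n)"
      using t by (simp add: powr_realpow)
    also have "\<dots> = 2 * t" using n t by (simp add: powr_powr)
    finally show ?thesis .
  qed
  finally have "enn2real (wmu \<omega> (Bxy x y)) powr (1 / real n) \<le> \<epsilon> powr (1 / real n) * (2 * t)" .
  then have "C * enn2real (wmu \<omega> (Bxy x y)) powr (1 / real n) \<le> C * (\<epsilon> powr (1 / real n) * (2 * t))"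
    using C by (intro mult_left_mono) auto
  then show ?thesis using upper[of x y] unfolding n_def by (simp add: mult.assoc)
qed



lemma cost_real:
  fixes M a t \<tau> :: real
  assumes "0 \<le> M" "0 \<le> a" "0 \<le> t" "0 < \<tau>" "\<tau> \<le> 1" "1 \<le> k"
  shows "M * (a*t+\<tau>)^(Suc k) / (a*t+\<tau>) \<le> M*2^k*(a^k*t^k) + M*2^k*\<tau>"
proof -
  have pos: "0 < a*t+\<tau>" using assms by (simp add: add_nonneg_pos)
  have "M * (a*t+\<tau>)^(Suc k) / (a*t+\<tau>) = M * (a*t+\<tau>)^k" using pos by simp
  also have "\<dots> \<le> M * (2^k * ((a*t)^k + \<tau>^k))"
    using assms by (intro mult_left_mono pow_sum_le) auto
  also have "\<tau>^k \<le> \<tau>" using assms by (simp add: power_le_one_iff power_decreasing[of 1 k \<tau>, simplified])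
  then have "M * (2^k * ((a*t)^k + \<tau>^k)) \<le> M * (2^k * ((a*t)^k + \<tau>))"
    using assms by (intro mult_left_mono) auto
  also have "\<dots> = M*2^k*(a^k*t^k) + M*2^k*\<tau>" by (simp add: algebra_simps power_mult_distrib)
  finally show ?thesis .
qed

lemma ident_real:
  fixes C \<epsilon> t :: real and n :: nat
  assumes "2 \<le> n" "0 < \<epsilon>" "0 \<le> t"
  shows "(2 * C * \<epsilon> powr (1 / real n)) ^ (n-1) * t ^ (n-1)
     = (2*C)^(n-1) * 2^(n-1) / hausdorff_const (real n - 1) * \<epsilon> powr ((real n - 1) / real n)
        * (hausdorff_const (real n - 1) * (t / 2) powr (real n - 1))"
proof -
  have hc: "0 < hausdorff_const (real n - 1)" using assms by (intro hc_pos) auto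
  have rn: "real (n - 1) = real n - 1" using assms by (simp add: of_nat_diff)
  have e1: "(\<epsilon> powr (1 / real n)) ^ (n-1) = \<epsilon> powr ((real n - 1) / real n)"
  proof -
    have "(\<epsilon> powr (1 / real n)) ^ (n-1) = (\<epsilon> powr (1 / real n)) powr (real (n-1))"
      by (rule powr_realpow[symmetric]) (use assms in simp)
    also have "\<dots> = \<epsilon> powr ((real n - 1) / real n)" using assms by (simp add: powr_powr of_nat_diff)
    finally show ?thesis .
  qed
  have t1: "t ^ (n-1) = 2^(n-1) * (t / 2) powr (real n - 1)"
  proof -
    have "(t / 2) powr (real n - 1) = (t/2) ^ (n-1)"
      using assms by (subst rn[symmetric], subst powr_realpow') auto
    then show ?thesis by (simp add: power_divide)
  qed
  show ?thesis unfolding power_mult_distrib e1 t1 using hc by (simp add: field_simps)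
qed

lemma codim_uniform:
  fixes \<omega> :: "'a::euclidean_space \<Rightarrow> real"
  assumes dim: "2 \<le> DIM('a)" and C: "1 \<le> C"
    and upper: "\<And>x y. d x y \<le> C * enn2real (wmu \<omega> (Bxy x y)) powr (1 / real DIM('a))"
    and w: "strong_Ainf_with \<omega> d" and dxx: "\<And>x. d x x = 0"
    and M: "0 < M" and dbb: "\<And>x \<rho>. 0 < \<rho> \<Longrightarrow> wmu \<omega> (dball d x \<rho>) \<le> ennreal (M * \<rho> ^ DIM('a))"
    and e: "0 < \<epsilon>" and r0: "0 < r0"
    and unif: "\<And>x r. x \<in> B \<Longrightarrow> 0 < r \<Longrightarrow> r < r0 \<Longrightarrow> wmu \<omega> (ball x r) \<le> ennreal (\<epsilon> * r ^ DIM('a))"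
  shows "codim1_H \<omega> d B \<le> ennreal (M * 2^(DIM('a)-1) * ((2*C)^(DIM('a)-1) * 2^(DIM('a)-1) / hausdorff_const (real DIM('a) - 1)))
            * ennreal (\<epsilon> powr ((real DIM('a) - 1) / real DIM('a))) * euc_hausdorff (real DIM('a) - 1) B"
proof -
  define n where "n = DIM('a)"
  define s where "s = real n - 1"
  have n2: "2 \<le> n" using dim unfolding n_def .
  have s0: "0 < s" using n2 unfolding s_def by simp
  have hc: "0 < hausdorff_const s" using s0 by (rule hc_pos)
  define K1 where "K1 = M * 2^(n-1) * ((2*C)^(n-1) * 2^(n-1) / hausdorff_const s)"
  define c where "c = K1 * \<epsilon> powr (s / real n)"
  have K1: "0 < K1" unfolding K1_def using M hc C by (intro mult_pos_pos divide_pos_pos) auto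
  have c: "0 < c" unfolding c_def using K1 e by simp
  define M2 where "M2 = M * 2^(n-1)"
  have M2: "0 < M2" unfolding M2_def using M by simp
  define a where "a = 2 * C * \<epsilon> powr (1 / real n)"
  have a: "0 \<le> a" unfolding a_def using C by simp
  let ?g = "\<lambda>X::'a set. ennreal (hausdorff_const s * (diameter X / 2) powr s)"
  have "codim1_H_delta \<omega> d \<delta> B \<le> ennreal c * euc_hausdorff s B" if \<delta>: "0 < \<delta>" for \<delta>
  proof (rule ennreal_le_epsilon)
    fix e :: real assume fin: "ennreal c * euc_hausdorff s B < top" and e0: "0 < e"
    have eucfin: "euc_hausdorff s B < top" using fin c by (auto simp: ennreal_mult_less_top)
    define \<eta> where "\<eta> = min (r0 / 4) (\<delta> / (2 * (a + 1)))"
    have \<eta>: "0 < \<eta>" "\<eta> \<le> r0 / 4" "\<eta> \<le> \<delta> / (2 * (a + 1))" unfolding \<eta>_def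
      using r0 \<delta> a by (simp add: add_nonneg_pos) (rule min.cobounded1, rule min.cobounded2)
    have a\<eta>: "a * \<eta> \<le> \<delta> / 2"
    proof -
      have "a * \<eta> \<le> a * (\<delta> / (2 * (a + 1)))" using a \<eta> by (intro mult_left_mono) auto
      also have "\<dots> = \<delta> / 2 * (a / (a + 1))" using a by (simp add: field_simps)
      also have "\<dots> \<le> \<delta> / 2 * 1" using a \<delta> by (intro mult_left_mono) auto
      finally show ?thesis by simp
    qed
    define e1 where "e1 = e / (2 * (c + 1))"
    have e1: "0 < e1" unfolding e1_def using e0 c by simp
    have ce1: "c * e1 \<le> e / 2"
    proof -
      have "c * e1 = e / 2 * (c / (c + 1))" unfolding e1_def using c by (simp add: field_simps)
      also have "\<dots> \<le> e / 2 * 1" using c e0 by (intro mult_left_mono) auto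
      finally show ?thesis by simp
    qed
    have eta_fin: "euc_hausdorff_delta s \<eta> B < top"
      using euc_delta_le[OF \<eta>(1), of s B] eucfin by (rule le_less_trans)
    then have "euc_hausdorff_delta s \<eta> B < euc_hausdorff_delta s \<eta> B + ennreal e1"
      using e1 by (simp add: ennreal_less_top less_top)
    then obtain Cv where Cv: "B \<subseteq> (\<Union>i. Cv i)" "\<And>i. bounded (Cv i)" "\<And>i. diameter (Cv i) < \<eta>"
      and Cvsum: "(\<Sum>i. ?g (Cv i)) < euc_hausdorff_delta s \<eta> B + ennreal e1"
      unfolding euc_hausdorff_delta_def INF_less_iff by blast
    define \<zeta> where "\<zeta> = min 1 (min (\<delta> / 4) (e / (2 * (M2 + 1))))"
    have z1: "\<zeta> \<le> 1" unfolding \<zeta>_def by (rule min.cobounded1)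
    have z2: "\<zeta> \<le> min (\<delta> / 4) (e / (2 * (M2 + 1)))" unfolding \<zeta>_def by (rule min.cobounded2)
    have z0: "0 < \<zeta>" unfolding \<zeta>_def using \<delta> e0 M2 by (simp add: add_nonneg_pos)
    have \<zeta>: "0 < \<zeta>" "\<zeta> \<le> 1" "\<zeta> \<le> \<delta> / 4" "\<zeta> \<le> e / (2 * (M2 + 1))"
      using z0 z1 z2 min.cobounded1[of "\<delta> / 4" "e / (2 * (M2 + 1))"] min.cobounded2[of "\<delta> / 4" "e / (2 * (M2 + 1))"]
      by linarith+
    have M2\<zeta>: "M2 * \<zeta> \<le> e / 2"
    proof -
      have "M2 * \<zeta> \<le> M2 * (e / (2 * (M2 + 1)))" using M2 \<zeta> by (intro mult_left_mono) auto
      also have "\<dots> = e / 2 * (M2 / (M2 + 1))" using M2 by (simp add: field_simps)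
      also have "\<dots> \<le> e / 2 * 1" using M2 e0 by (intro mult_left_mono) auto
      finally show ?thesis by simp
    qed
    define \<tau> where "\<tau> i = \<zeta> / 2 ^ Suc i" for i :: nat
    have \<tau>: "0 < \<tau> i" "\<tau> i \<le> 1" "\<tau> i \<le> \<delta> / 4" for i
    proof -
      show "0 < \<tau> i" unfolding \<tau>_def using \<zeta> by simp
      have h: "(1::real) \<le> 2 ^ Suc i" by (rule one_le_power) simp
      have "\<tau> i \<le> \<zeta>" unfolding \<tau>_def using \<zeta> h by (simp add: divide_le_eq)
      then show "\<tau> i \<le> 1" "\<tau> i \<le> \<delta> / 4" using \<zeta> by auto
    qed
    define I where "I = {i. Cv i \<inter> B \<noteq> {}}"
    define ctr where "ctr i = (SOME x. x \<in> Cv i \<inter> B)" for i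
    define rad where "rad i = a * diameter (Cv i) + \<tau> i" for i
    have ctr: "ctr i \<in> Cv i \<inter> B" if "i \<in> I" for i
      using that unfolding I_def ctr_def by (metis (mono_tags, lifting) ex_in_conv mem_Collect_eq someI_ex)
    have diam0: "0 \<le> diameter (Cv i)" for i using Cv(2) by (rule diameter_ge_0)
    have rad: "0 < rad i" "rad i < \<delta>" for i
    proof -
      have at: "a * diameter (Cv i) \<le> a * \<eta>" using a Cv(3)[of i] by (intro mult_left_mono) auto
      have "0 \<le> a * diameter (Cv i)" using a diam0[of i] by simp
      then show "0 < rad i" unfolding rad_def using \<tau>(1)[of i] by linarith
      show "rad i < \<delta>" unfolding rad_def using at a\<eta> \<tau>(3)[of i] \<delta> by linarith
    qed
    have cover: "B \<subseteq> (\<Union>i\<in>I. dball d (ctr i) (rad i))"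
    proof
      fix x assume x: "x \<in> B"
      then obtain i where i: "x \<in> Cv i" using Cv(1) by auto
      then have iI: "i \<in> I" using x unfolding I_def by auto
      define y where "y = ctr i"
      define t where "t = diameter (Cv i)"
      have y: "y \<in> Cv i" "y \<in> B" using ctr[OF iI] unfolding y_def by auto
      have dyx: "dist y x \<le> t" unfolding t_def using Cv(2) y(1) i by (rule diameter_bounded_bound)
      have "d y x \<le> a * t"
      proof (cases "t = 0")
        case True
        then have "y = x" using dyx by simp
        then show ?thesis using dxx True by simp
      next
        case False
        then have t0: "0 < t" using diam0[of i] unfolding t_def by simp
        have "t < \<eta>" unfolding t_def by (rule Cv(3))
        then have "2 * t < r0" using \<eta> by simp
        then have "wmu \<omega> (ball y (2 * t)) \<le> ennreal (\<epsilon> * (2 * t) ^ DIM('a))"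
          using unif[OF y(2), of "2 * t"] t0 by (simp del: power_mult_distrib)
        from dist_to_d[OF w C upper dyx t0 e this]
        show ?thesis unfolding a_def n_def by (simp add: mult_ac)
      qed
      then have "d y x < rad i" unfolding rad_def t_def using \<tau>[of i] by simp
      then show "x \<in> (\<Union>i\<in>I. dball d (ctr i) (rad i))" using iI unfolding dball_def y_def by auto
    qed
    have "codim1_H_delta \<omega> d \<delta> B \<le> (\<Sum>i. if i \<in> I then wmu \<omega> (dball d (ctr i) (rad i)) / ennreal (rad i) else 0)"
      unfolding codim1_H_delta_def
    proof (rule INF_lower2)
      show "(I, ctr, rad) \<in> {(I, c, r). B \<subseteq> (\<Union>i\<in>I. dball d (c i) (r i)) \<and> (\<forall>i\<in>I. 0 < r i \<and> r i < \<delta>)}"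
        using cover rad by auto
    qed simp
    also have "\<dots> \<le> (\<Sum>i. ennreal c * ?g (Cv i) + ennreal (M2 * \<tau> i))"
    proof (intro suminf_le, simp_all only: summableI)
      fix i
      show "(if i \<in> I then wmu \<omega> (dball d (ctr i) (rad i)) / ennreal (rad i) else 0)
            \<le> ennreal c * ?g (Cv i) + ennreal (M2 * \<tau> i)"
      proof (cases "i \<in> I")
        case False then show ?thesis by simp
      next
        case True
        define t where "t = diameter (Cv i)"
        have t0: "0 \<le> t" unfolding t_def by (rule diam0)
        have "wmu \<omega> (dball d (ctr i) (rad i)) / ennreal (rad i) \<le> ennreal (M * rad i ^ n) / ennreal (rad i)"
          using dbb[OF rad(1)] unfolding n_def by (rule divide_right_mono_ennreal)
        also have "\<dots> = ennreal (M * rad i ^ n / rad i)"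
          using M rad(1)[of i] by (intro divide_ennreal) auto
        also have "M * rad i ^ n / rad i \<le> M*2^(n-1)*(a^(n-1)*t^(n-1)) + M*2^(n-1)*\<tau> i"
        proof -
          have nS: "n = Suc (n-1)" using n2 by simp
          show ?thesis unfolding rad_def t_def
            using cost_real[of M a "diameter (Cv i)" "\<tau> i" "n-1"] M a diam0[of i] \<tau>[of i] n2
            by (subst nS) auto
        qed
        also have "a^(n-1)*t^(n-1) = (2*C)^(n-1) * 2^(n-1) / hausdorff_const s * \<epsilon> powr (s / real n)
              * (hausdorff_const s * (t / 2) powr s)"
          unfolding a_def s_def using ident_real[OF n2 e t0] by (simp add: power_mult_distrib)
        also have "M*2^(n-1)*((2*C)^(n-1) * 2^(n-1) / hausdorff_const s * \<epsilon> powr (s / real n)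
              * (hausdorff_const s * (t / 2) powr s)) = c * (hausdorff_const s * (t / 2) powr s)"
          unfolding c_def K1_def by (simp add: mult_ac)
        finally have "wmu \<omega> (dball d (ctr i) (rad i)) / ennreal (rad i)
            \<le> ennreal (c * (hausdorff_const s * (t / 2) powr s) + M2 * \<tau> i)"
          unfolding M2_def by (simp add: ennreal_leI order_trans)
        also have "\<dots> = ennreal c * ?g (Cv i) + ennreal (M2 * \<tau> i)"
          unfolding t_def using c hc M2 \<tau>[of i]
          by (simp add: ennreal_plus[symmetric] ennreal_mult[symmetric] del: ennreal_plus)
        finally show ?thesis using True by simp
      qed
    qed
    also have "\<dots> = ennreal c * (\<Sum>i. ?g (Cv i)) + (\<Sum>i. ennreal (M2 * \<tau> i))"
      by (subst suminf_add[symmetric]) auto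
    also have "(\<Sum>i. ennreal (M2 * \<tau> i)) = ennreal (M2 * \<zeta>)"
    proof -
      have "(\<lambda>i. M2 * \<tau> i) sums (M2 * \<zeta>)"
        unfolding \<tau>_def using power_half_series[THEN sums_mult, of "M2 * \<zeta>"] by (simp add: field_simps)
      then show ?thesis using M2 \<tau> by (intro suminf_ennreal_eq) (auto intro: less_imp_le)
    qed
    also have "ennreal c * (\<Sum>i. ?g (Cv i)) \<le> ennreal c * (euc_hausdorff s B + ennreal e1)"
    proof (intro mult_left_mono)
      show "(\<Sum>i. ?g (Cv i)) \<le> euc_hausdorff s B + ennreal e1"
        using Cvsum euc_delta_le[OF \<eta>(1), of s B] by (meson add_right_mono less_imp_le order_trans)
    qed simp
    also have "ennreal c * (euc_hausdorff s B + ennreal e1) + ennreal (M2 * \<zeta>)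
        = ennreal c * euc_hausdorff s B + (ennreal (c * e1) + ennreal (M2 * \<zeta>))"
      using c e1 by (simp add: distrib_left ennreal_mult add.assoc)
    also have "ennreal (c * e1) + ennreal (M2 * \<zeta>) \<le> ennreal e"
    proof -
      have "ennreal (c * e1) + ennreal (M2 * \<zeta>) = ennreal (c * e1 + M2 * \<zeta>)"
        using c e1 M2 \<zeta> by (simp add: ennreal_plus)
      also have "\<dots> \<le> ennreal e" using ce1 M2\<zeta> by (intro ennreal_leI) linarith
      finally show ?thesis .
    qed
    finally show "codim1_H_delta \<omega> d \<delta> B \<le> ennreal c * euc_hausdorff s B + ennreal e"
      by (simp add: add_left_mono)
  qed
  then have "codim1_H \<omega> d B \<le> ennreal c * euc_hausdorff s B"
    unfolding codim1_H_def by (intro SUP_least) auto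
  also have "ennreal c = ennreal K1 * ennreal (\<epsilon> powr (s / real n))"
    unfolding c_def using K1 by (simp add: ennreal_mult)
  finally show ?thesis unfolding K1_def s_def n_def .
qed



lemma closed_ball_le:
  fixes \<omega> :: "'a::euclidean_space \<Rightarrow> real"
  shows "closed {x. wmu \<omega> (ball x r) \<le> c}"
proof -
  have "open (- {x. wmu \<omega> (ball x r) \<le> c})"
    unfolding open_dist
  proof (intro ballI)
    fix x assume "x \<in> - {x. wmu \<omega> (ball x r) \<le> c}"
    then have gt: "c < wmu \<omega> (ball x r)" by (simp add: not_le)
    define A where "A k = ball x (r - r / real (Suc (Suc k)))" for k
    have meas: "range A \<subseteq> sets (wmeasure \<omega>)" unfolding A_def by (auto intro: open_sets_wm)
    have inc: "incseq A"
    proof (rule incseq_SucI)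
      fix k
      show "A k \<subseteq> A (Suc k)"
      proof (cases "0 \<le> r")
        case True
        then have "r / real (Suc (Suc (Suc k))) \<le> r / real (Suc (Suc k))"
          by (intro divide_left_mono) auto
        then show ?thesis unfolding A_def by (intro subset_ball) auto
      next
        case False
        then have "A k = {}" unfolding A_def
          using mult_nonpos_nonneg[of r "real k"] by (simp add: field_simps ball_empty)
        then show ?thesis by simp
      qed
    qed
    have "(\<Union>k. A k) = ball x r"
    proof safe
      fix z k assume zk: "z \<in> A k"
      have "A k \<subseteq> ball x r"
      proof (cases "0 \<le> r")
        case True then show ?thesis unfolding A_def by (intro subset_ball) auto
      next
        case False
        then have "A k = {}" unfolding A_def
          using mult_nonpos_nonneg[of r "real k"] by (simp add: field_simps ball_empty)
        then show ?thesis by simp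
      qed
      then show "z \<in> ball x r" using zk by auto
    next
      fix z assume z: "z \<in> ball x r"
      then have r: "0 < r" using zero_le_dist[of x z] by (simp only: mem_ball)
      have "0 < r - dist x z" using z by simp
      then obtain k where k: "r / (r - dist x z) < real k" using reals_Archimedean2 by blast
      then have "r / real (Suc (Suc k)) < r - dist x z"
        using r \<open>0 < r - dist x z\<close> by (auto simp: field_simps)
      then have "z \<in> A k" unfolding A_def by simp
      then show "z \<in> (\<Union>k. A k)" by blast
    qed
    then have "(SUP k. wmu \<omega> (A k)) = wmu \<omega> (ball x r)" using SUP_emeasure_incseq[OF meas inc] by simp
    then obtain k where k: "c < wmu \<omega> (A k)" using gt less_SUP_iff by (metis UNIV_I)
    have "A k \<noteq> {}" using k by auto
    then have rr: "0 < r - r / real (Suc (Suc k))" unfolding A_def by simp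
    have r: "0 < r"
    proof (rule ccontr)
      assume "\<not> 0 < r"
      have eq: "r / real (Suc (Suc k)) - r = (-r) * (real (Suc k) / real (Suc (Suc k)))"
        by (simp add: field_simps)
      have "0 \<le> (-r) * (real (Suc k) / real (Suc (Suc k)))"
        using \<open>\<not> 0 < r\<close> by (intro mult_nonneg_nonneg) auto
      then show False using rr eq by linarith
    qed
    define e where "e = r / real (Suc (Suc k))"
    have e: "0 < e" unfolding e_def using r by simp
    show "\<exists>e>0. \<forall>y. dist y x < e \<longrightarrow> y \<in> - {x. wmu \<omega> (ball x r) \<le> c}"
    proof (intro exI[of _ e] conjI allI impI)
      fix y assume "dist y x < e"
      then have yx: "dist y x < r / real (Suc (Suc k))" unfolding e_def .
      have "A k \<subseteq> ball y r" unfolding A_def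
      proof
        fix z assume "z \<in> ball x (r - r / real (Suc (Suc k)))"
        then have "dist x z < r - r / real (Suc (Suc k))" by simp
        moreover have "dist y z \<le> dist y x + dist x z" by (rule dist_triangle)
        ultimately show "z \<in> ball y r" using yx by simp
      qed
      then have "wmu \<omega> (A k) \<le> wmu \<omega> (ball y r)" by (intro emeasure_mono open_sets_wm) auto
      then show "y \<in> - {x. wmu \<omega> (ball x r) \<le> c}" using k by (simp add: not_le less_le_trans)
    qed (rule e)
  qed
  then show ?thesis by (simp add: closed_def)
qed



lemma codim_limsup:
  fixes \<omega> :: "'a::euclidean_space \<Rightarrow> real"
  assumes dim: "2 \<le> DIM('a)" and w: "strong_Ainf_with \<omega> d"
  shows "\<exists>K>0. \<forall>\<epsilon>>0. \<forall>A. (\<forall>x\<in>A. Limsup (at_right 0) (\<lambda>r. wmu \<omega> (ball x r) / ennreal (r ^ DIM('a))) < ennreal \<epsilon>)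
            \<longrightarrow> codim1_H \<omega> d A \<le> ennreal K * ennreal (\<epsilon> powr ((real DIM('a) - 1) / real DIM('a)))
                  * euc_hausdorff (real DIM('a) - 1) A"
proof -
  define n where "n = DIM('a)"
  obtain Cd where Cd: "0 \<le> Cd" and dbl: "\<forall>x r. 0 < r \<longrightarrow> wmu \<omega> (ball x (2 * r)) \<le> ennreal Cd * wmu \<omega> (ball x r)"
    using wfacts(4)[OF w] by blast
  obtain C where C: "1 \<le> C" and CC: "\<forall>x y. enn2real (wmu \<omega> (Bxy x y)) powr (1 / real DIM('a)) / C \<le> d x y \<and>
        d x y \<le> C * enn2real (wmu \<omega> (Bxy x y)) powr (1 / real DIM('a))"
    using wfacts(6)[OF w] by blast
  have lower: "\<And>x y. enn2real (wmu \<omega> (Bxy x y)) powr (1 / real DIM('a)) / C \<le> d x y" using CC by blast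
  have upper: "\<And>x y. d x y \<le> C * enn2real (wmu \<omega> (Bxy x y)) powr (1 / real DIM('a))" using CC by blast
  have dxx: "\<And>x. d x x = 0" using wfacts(5)[OF w] unfolding is_metric_def by blast
  define M where "M = Cd ^ 3 * C ^ n + 1"
  have M: "0 < M" unfolding M_def using Cd C by (simp add: add_nonneg_pos)
  have dbb: "wmu \<omega> (dball d x \<rho>) \<le> ennreal (M * \<rho> ^ DIM('a))" if "0 < \<rho>" for x \<rho>
  proof -
    have "wmu \<omega> (dball d x \<rho>) \<le> ennreal (Cd ^ 3) * ennreal ((C * \<rho>) ^ DIM('a))"
      by (rule dball_bound[OF w C lower Cd dbl])
    also have "\<dots> = ennreal (Cd ^ 3 * C ^ n * \<rho> ^ n)"
      using Cd C that unfolding n_def by (simp add: ennreal_mult[symmetric] power_mult_distrib mult.assoc)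
    also have "\<dots> \<le> ennreal (M * \<rho> ^ n)"
      unfolding M_def using that by (intro ennreal_leI mult_right_mono) auto
    finally show ?thesis unfolding n_def .
  qed
  define K where "K = M * 2^(DIM('a)-1) * ((2*C)^(DIM('a)-1) * 2^(DIM('a)-1) / hausdorff_const (real DIM('a) - 1))"
  have K: "0 < K" unfolding K_def using M C dim by (intro mult_pos_pos divide_pos_pos hc_pos) auto
  show ?thesis
  proof (intro exI[of _ K] conjI allI impI K)
    fix \<epsilon> :: real and A :: "'a set"
    assume e: "0 < \<epsilon>"
      and hyp: "\<forall>x\<in>A. Limsup (at_right 0) (\<lambda>r. wmu \<omega> (ball x r) / ennreal (r ^ DIM('a))) < ennreal \<epsilon>"
    let ?s = "real DIM('a) - 1"
    let ?K' = "ennreal K * ennreal (\<epsilon> powr (?s / real DIM('a)))"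
    define T where "T m = {x. \<forall>r. 0 < r \<and> r < 1 / (real m + 1) \<longrightarrow> wmu \<omega> (ball x r) \<le> ennreal (\<epsilon> * r ^ DIM('a))}" for m :: nat
    have Tclosed: "closed (T m)" for m
    proof -
      have "T m = (\<Inter>r\<in>{r. 0 < r \<and> r < 1 / (real m + 1)}. {x. wmu \<omega> (ball x r) \<le> ennreal (\<epsilon> * r ^ DIM('a))})"
        unfolding T_def by auto
      then show ?thesis by (auto intro!: closed_INT closed_ball_le)
    qed
    have Tmono: "T i \<subseteq> T j" if "i \<le> j" for i j
    proof -
      have "1 / (real j + 1) \<le> 1 / (real i + 1)" using that by (simp add: frac_le)
      then show ?thesis unfolding T_def by (auto intro: less_le_trans)
    qed
    have Tcov: "\<exists>m. x \<in> T m" if x: "x \<in> A" for x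
    proof -
      have "eventually (\<lambda>r. wmu \<omega> (ball x r) / ennreal (r ^ DIM('a)) < ennreal \<epsilon>) (at_right 0)"
        using hyp x by (intro Limsup_lessD) auto
      then obtain b :: real where b: "0 < b" "\<And>r. 0 < r \<Longrightarrow> r < b \<Longrightarrow> wmu \<omega> (ball x r) / ennreal (r ^ DIM('a)) < ennreal \<epsilon>"
        unfolding eventually_at_right_field by blast
      obtain m :: nat where m: "inverse (real (Suc m)) < b" using reals_Archimedean[OF b(1)] by blast
      have "x \<in> T m" unfolding T_def
      proof (safe)
        fix r :: real assume r: "0 < r" "r < 1 / (real m + 1)"
        then have "r < b" using m by (simp add: inverse_eq_divide add.commute)
        then have "wmu \<omega> (ball x r) / ennreal (r ^ DIM('a)) < ennreal \<epsilon>" using b r by blast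
        then have "wmu \<omega> (ball x r) < ennreal \<epsilon> * ennreal (r ^ DIM('a))"
          using r by (subst (asm) divide_less_ennreal) auto
        then show "wmu \<omega> (ball x r) \<le> ennreal (\<epsilon> * r ^ DIM('a))"
          using e r by (simp add: ennreal_mult[symmetric])
      qed
      then show ?thesis by blast
    qed
    define S where "S N = (if N = 0 then {} else T (N - 1))" for N :: nat
    have Sclosed: "closed (S N)" for N unfolding S_def using Tclosed by auto
    have Smono: "S N \<subseteq> S (Suc N)" for N unfolding S_def using Tmono by auto
    define D where "D m = A \<inter> S (Suc m) - S m" for m
    have Acov: "A \<subseteq> (\<Union>m. D m)"
    proof
      fix x assume x: "x \<in> A"
      obtain m where "x \<in> T m" using Tcov[OF x] by blast
      then have ex: "x \<in> S (Suc m)" unfolding S_def by simp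
      define N where "N = (LEAST N. x \<in> S N)"
      have xN: "x \<in> S N" unfolding N_def by (rule LeastI[of _ "Suc m"]) (rule ex)
      then have "N \<noteq> 0" unfolding S_def by (cases "N = 0") auto
      then obtain k where k: "N = Suc k" by (cases N) auto
      have "x \<notin> S k" using k unfolding N_def using not_less_Least[of k "\<lambda>N. x \<in> S N"] by auto
      then have "x \<in> D k" unfolding D_def using x xN k by auto
      then show "x \<in> (\<Union>m. D m)" by blast
    qed
    have partial: "(\<Sum>m<N. euc_hausdorff ?s (D m)) \<le> euc_hausdorff ?s (A \<inter> S N)" for N
    proof (induction N)
      case 0 then show ?case by simp
    next
      case (Suc N)
      have s0: "0 < ?s" using dim by simp
      have X1: "(A \<inter> S (Suc N)) \<inter> S N = A \<inter> S N" using Smono[of N] by auto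
      have X2: "(A \<inter> S (Suc N)) - S N = D N" unfolding D_def by auto
      have "(\<Sum>m<Suc N. euc_hausdorff ?s (D m)) = (\<Sum>m<N. euc_hausdorff ?s (D m)) + euc_hausdorff ?s (D N)" by simp
      also have "\<dots> \<le> euc_hausdorff ?s (A \<inter> S N) + euc_hausdorff ?s (D N)" using Suc.IH by (rule add_right_mono)
      also have "\<dots> \<le> euc_hausdorff ?s (A \<inter> S (Suc N))"
        using euc_caratheodory_closed[OF Sclosed[of N] s0, of "A \<inter> S (Suc N)"] unfolding X1 X2 .
      finally show ?case .
    qed
    have sumD: "(\<Sum>m. euc_hausdorff ?s (D m)) \<le> euc_hausdorff ?s A"
    proof (rule suminf_le_const, simp)
      fix N
      show "(\<Sum>m<N. euc_hausdorff ?s (D m)) \<le> euc_hausdorff ?s A"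
        using partial[of N] euc_mono[of "A \<inter> S N" A ?s] by (rule order_trans) auto
    qed
    have Dm: "codim1_H \<omega> d (D m) \<le> ?K' * euc_hausdorff ?s (D m)" for m
    proof -
      have r0: "0 < 1 / (real m + 1)" by simp
      have "codim1_H \<omega> d (D m) \<le> ennreal K * ennreal (\<epsilon> powr ((real DIM('a) - 1) / real DIM('a)))
            * euc_hausdorff (real DIM('a) - 1) (D m)"
        unfolding K_def
      proof (rule codim_uniform[OF dim C upper w dxx M dbb e r0])
        fix x r assume "x \<in> D m" "0 < r" "r < 1 / (real m + 1)"
        then show "wmu \<omega> (ball x r) \<le> ennreal (\<epsilon> * r ^ DIM('a))" unfolding D_def S_def T_def by auto
      qed
      then show ?thesis .
    qed
    have "codim1_H \<omega> d A \<le> codim1_H \<omega> d (\<Union>m. D m)" using Acov by (rule codim_mono)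
    also have "\<dots> \<le> (\<Sum>m. codim1_H \<omega> d (D m))" by (rule codim_countable_subadd)
    also have "\<dots> \<le> (\<Sum>m. ?K' * euc_hausdorff ?s (D m))" using Dm by (intro suminf_le) auto
    also have "\<dots> = ?K' * (\<Sum>m. euc_hausdorff ?s (D m))" by simp
    also have "\<dots> \<le> ?K' * euc_hausdorff ?s A" using sumD by (rule mult_left_mono) simp
    finally show "codim1_H \<omega> d A \<le> ?K' * euc_hausdorff ?s A" .
  qed
qed

theorem lemma7p4:
  fixes \<omega> :: "'a::euclidean_space \<Rightarrow> real" and d :: "'a \<Rightarrow> 'a \<Rightarrow> real"
    and K :: real and \<Omega> E :: "'a set"
  assumes dim: "DIM('a) \<ge> 2"
    and weight: "strong_Ainf_with \<omega> d"
    and Omega: "open \<Omega>"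
    and EOmega: "E \<subseteq> \<Omega>"
    and K: "1 \<le> K"
    and qmin: "quasiminimal \<omega> d K \<Omega> E"
    and finper: "perimeter \<omega> d E \<Omega> < \<infinity>"
    and norm1: "E = interior (closure E)"
    and norm2: "\<And>x r. x \<in> frontier E \<Longrightarrow> 0 < r \<Longrightarrow>
                  wmu \<omega> (ball x r \<inter> E) > 0 \<and> wmu \<omega> (ball x r - E) > 0"
  shows "(codim1_H \<omega> d {x \<in> \<Omega> \<inter> frontier E.
              Limsup (at_right 0) (\<lambda>r. wmu \<omega> (ball x r) / ennreal (r ^ DIM('a))) = 0} = 0
         \<or> euc_hausdorff (real DIM('a) - 1) {x \<in> \<Omega> \<inter> frontier E.
              Limsup (at_right 0) (\<lambda>r. wmu \<omega> (ball x r) / ennreal (r ^ DIM('a))) = 0} = \<infinity>)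
    \<and> (\<exists>C>0. \<forall>\<epsilon>>0.
           codim1_H \<omega> d {x \<in> \<Omega> \<inter> frontier E.
              Limsup (at_right 0) (\<lambda>r. wmu \<omega> (ball x r) / ennreal (r ^ DIM('a))) < ennreal \<epsilon>}
         \<le> ennreal C * ennreal (\<epsilon> powr ((real DIM('a) - 1) / real DIM('a)))
            * euc_hausdorff (real DIM('a) - 1) {x \<in> \<Omega> \<inter> frontier E.
              Limsup (at_right 0) (\<lambda>r. wmu \<omega> (ball x r) / ennreal (r ^ DIM('a))) < ennreal \<epsilon>})"
proof -
  obtain C where C: "0 < C" and CB: "\<And>\<epsilon> A. 0 < \<epsilon> \<Longrightarrow>
      (\<forall>x\<in>A. Limsup (at_right 0) (\<lambda>r. wmu \<omega> (ball x r) / ennreal (r ^ DIM('a))) < ennreal \<epsilon>) \<Longrightarrow>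
      codim1_H \<omega> d A \<le> ennreal C * ennreal (\<epsilon> powr ((real DIM('a) - 1) / real DIM('a)))
                  * euc_hausdorff (real DIM('a) - 1) A"
    using codim_limsup[OF dim weight] by blast
  let ?F0 = "{x \<in> \<Omega> \<inter> frontier E. Limsup (at_right 0) (\<lambda>r. wmu \<omega> (ball x r) / ennreal (r ^ DIM('a))) = 0}"
  let ?p = "(real DIM('a) - 1) / real DIM('a)"
  have p: "0 < ?p" using dim by simp
  have part1: "codim1_H \<omega> d ?F0 = 0 \<or> euc_hausdorff (real DIM('a) - 1) ?F0 = \<infinity>"
  proof (cases "euc_hausdorff (real DIM('a) - 1) ?F0 = \<infinity>")
    case True then show ?thesis by simp
  next
    case False
    then obtain q where q: "euc_hausdorff (real DIM('a) - 1) ?F0 = ennreal q" "0 \<le> q"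
      by (cases "euc_hausdorff (real DIM('a) - 1) ?F0" rule: ennreal_cases) auto
    have "codim1_H \<omega> d ?F0 \<le> 0"
    proof (rule ennreal_le_epsilon)
      fix e :: real assume e: "0 < e"
      define z where "z = e / (C * q + 1)"
      have z: "0 < z" unfolding z_def using e C q by (simp add: add_nonneg_pos)
      define \<epsilon> where "\<epsilon> = z powr (1 / ?p)"
      have eps: "0 < \<epsilon>" unfolding \<epsilon>_def using z by simp
      have epsp: "\<epsilon> powr ?p = z" unfolding \<epsilon>_def using z p dim by (simp add: powr_powr)
      have "codim1_H \<omega> d ?F0 \<le> ennreal C * ennreal (\<epsilon> powr ?p) * euc_hausdorff (real DIM('a) - 1) ?F0"
        using eps by (intro CB) auto
      also have "\<dots> = ennreal (C * z * q)" unfolding epsp q using C z q by (simp add: ennreal_mult)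
      also have "C * z * q \<le> e"
      proof -
        have "C * z * q = e * (C * q / (C * q + 1))" unfolding z_def using C q by (simp add: field_simps add_nonneg_pos)
        also have "\<dots> \<le> e * 1"
        proof -
          have "0 \<le> C * q" using C q by simp
          then have h: "C * q / (C * q + 1) \<le> 1" by (simp add: divide_le_eq)
          show ?thesis by (rule mult_left_mono[OF h]) (use e in linarith)
        qed
        finally show ?thesis by simp
      qed
      then have "ennreal (C * z * q) \<le> 0 + ennreal e" by (simp add: ennreal_leI)
      finally show "codim1_H \<omega> d ?F0 \<le> 0 + ennreal e" .
    qed
    then show ?thesis by simp
  qed
  have part2: "\<exists>C>0. \<forall>\<epsilon>>0.
           codim1_H \<omega> d {x \<in> \<Omega> \<inter> frontier E.
              Limsup (at_right 0) (\<lambda>r. wmu \<omega> (ball x r) / ennreal (r ^ DIM('a))) < ennreal \<epsilon>}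
         \<le> ennreal C * ennreal (\<epsilon> powr ((real DIM('a) - 1) / real DIM('a)))
            * euc_hausdorff (real DIM('a) - 1) {x \<in> \<Omega> \<inter> frontier E.
              Limsup (at_right 0) (\<lambda>r. wmu \<omega> (ball x r) / ennreal (r ^ DIM('a))) < ennreal \<epsilon>}"
  proof (intro exI[of _ C] conjI allI impI C)
    fix \<epsilon> :: real assume "0 < \<epsilon>"
    then show "codim1_H \<omega> d {x \<in> \<Omega> \<inter> frontier E.
              Limsup (at_right 0) (\<lambda>r. wmu \<omega> (ball x r) / ennreal (r ^ DIM('a))) < ennreal \<epsilon>}
         \<le> ennreal C * ennreal (\<epsilon> powr ((real DIM('a) - 1) / real DIM('a)))
            * euc_hausdorff (real DIM('a) - 1) {x \<in> \<Omega> \<inter> frontier E.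
              Limsup (at_right 0) (\<lambda>r. wmu \<omega> (ball x r) / ennreal (r ^ DIM('a))) < ennreal \<epsilon>}"
      by (intro CB) auto
  qed
  show ?thesis using part1 part2 by (intro conjI)
qed


end
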